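(* (1) The code $\mathcal C:\mathbb{F}_q^5\to(\mathbb{F}_q^2)^5$ given by $\mathbf c_i=(x_i,\,x_{i+2}+x_{i+3})$ for $i\in[5]$ (indices modulo $5$ in $[5]$; explicitly $\mathbf c_1=(x_1,x_3+x_4)$, $\mathbf c_2=(x_2,x_4+x_5)$, $\mathbf c_3=(x_3,x_5+x_1)$, $\mathbf c_4=(x_4,x_1+x_2)$, $\mathbf c_5=(x_5,x_2+x_3)$) is a $(5,10,3,5)$-BAC. (2) The code of Construction C built from the good vector $\mathbf v=(2,3,2,4,3,1,1,4)$ (with $t=4$, $n=17$) is a $(17,85,7,17)$-BAC.
   Context: Fix a finite field $\mathbb{F}_q$. For $\mathbf v$ with $t=4$ and $j\in[4]$, $j(\mathbf v)=\max\{i:v_i=j\}$ (so $1(\mathbf v)=7$, $2(\mathbf v)=3$, $3(\mathbf v)=5$, $4(\mathbf v)=8$). Construction C with $n=17$: indices modulo $17$ in $[17]$; for $\mathbf x\in\mathbb{F}_q^{17}$, $i\in[17]$, $j\in[4]$ put $y_{i,j}=x_{i-4-j(\mathbf v)}+x_{i-4-j(\mathbf v)+j}$ and $\mathbf c_i=(x_i,y_{i,1},\dots,y_{i,4})$. An $(n,N,k,m)$-batch array code (BAC) over $\mathbb{F}_q$ is an $\mathbb{F}_q$-linear map $\mathbf x\in\mathbb{F}_q^n\mapsto(\mathbf c_1,\dots,\mathbf c_m)$ with buckets $\mathbf c_\ell\in\mathbb{F}_q^{N_\ell}$, $N_\ell\ge1$, $\sum_\ell N_\ell=N$, such that for every multiset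 $\{\{i_1,\dots,i_k\}\}$ of elements of $[n]$ there is a partition of $[m]$ into $k$ sets $R_1,\dots,R_k$ such that for each $j\in[k]$, $x_{i_j}$ is an $\mathbb{F}_q$-linear combination of values $f_\ell(\mathbf c_\ell)$, $\ell\in R_j$, for some linear functionals $f_\ell$ (independent of $\mathbf x$). *)

theory Defs
  imports Main
begin

definition modidx :: "nat \<Rightarrow> int \<Rightarrow> nat" where
  "modidx n i = nat ((i - 1) mod int n) + 1"

text \<open>A code with m buckets over F_q is given by bucket sizes Nsz l (l in [m]) and
  coordinate maps enc l r x (the r-th entry, r in [Nsz l], of bucket c_l, as a function of
  the message x, whose coordinates x 1, ..., x n are used).
  is_BAC expresses that this is an (n,N,k,m)-batch array code.\<close>
definition is_BAC ::
  "nat \<Rightarrow> nat \<Rightarrow> nat \<Rightarrow> nat \<Rightarrow> (nat \<Rightarrow> nat) \<Rightarrow> (nat \<Rightarrow> nat \<Rightarrow> (nat \<Rightarrow> 'a::field) \<Rightarrow> 'a) \<Rightarrow> bool"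
where
  "is_BAC n N k m Nsz enc \<longleftrightarrow>
     (\<forall>l\<in>{1..m}. Nsz l \<ge> 1) \<and>
     (\<Sum>l=1..m. Nsz l) = N \<and>
     \<comment> \<open>the encoding is F_q-linear in x in F_q^n\<close>
     (\<forall>l\<in>{1..m}. \<forall>r\<in>{1..Nsz l}. \<exists>g :: nat \<Rightarrow> 'a.
         \<forall>x. enc l r x = (\<Sum>i=1..n. g i * x i)) \<and>
     \<comment> \<open>every multiset of k requests (listed as a list) is served by a partition of [m]\<close>
     (\<forall>idx :: nat list. length idx = k \<and> set idx \<subseteq> {1..n} \<longrightarrow>
        (\<exists>R :: nat \<Rightarrow> nat set.
           (\<forall>j<k. R j \<subseteq> {1..m}) \<and>
           (\<forall>j<k. \<forall>j'<k. j \<noteq> j' \<longrightarrow> R j \<inter> R j' = {}) \<and>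
           (\<Union>j<k. R j) = {1..m} \<and>
           (\<forall>j<k. \<exists>a :: nat \<Rightarrow> nat \<Rightarrow> 'a.
              \<forall>x. x (idx ! j) = (\<Sum>l\<in>R j. \<Sum>r=1..Nsz l. a l r * enc l r x))))"

definition code5 :: "nat \<Rightarrow> nat \<Rightarrow> (nat \<Rightarrow> 'a::field) \<Rightarrow> 'a" where
  "code5 l r x =
     (if r = 1 then x l
      else if r = 2 then x (modidx 5 (int l + 2)) + x (modidx 5 (int l + 3))
      else 0)"

definition jv :: "nat list \<Rightarrow> nat \<Rightarrow> nat" where
  "jv v j = Max {i \<in> {1..length v}. v ! (i - 1) = j}"

definition constrC :: "nat \<Rightarrow> nat \<Rightarrow> nat list \<Rightarrow> nat \<Rightarrow> nat \<Rightarrow> (nat \<Rightarrow> 'a::field) \<Rightarrow> 'a" where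
  "constrC n t v i r x =
     (if r = 1 then x i
      else if 2 \<le> r \<and> r \<le> t + 1 then
        (let j = r - 1 in
          x (modidx n (int i - int t - int (jv v j)))
          + x (modidx n (int i - int t - int (jv v j) + int j)))
      else 0)"

end

theory Submission
  imports Defs
begin


lemma jv1: "jv [2,3,2,4,3,1,1,4] 1 = 7" by code_simp
lemma jv2: "jv [2,3,2,4,3,1,1,4] 2 = 3" by code_simp
lemma jv3: "jv [2,3,2,4,3,1,1,4] 3 = 5" by code_simp
lemma jv4: "jv [2,3,2,4,3,1,1,4] 4 = 8" by code_simp

lemma modidx_range: "n > 0 \<Longrightarrow> modidx n a \<in> {1..n}"
proof -
  assume n: "n > 0"
  have "(a - 1) mod int n < int n" using n by simp
  moreover have "0 \<le> (a - 1) mod int n" using n by simp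
  ultimately show ?thesis unfolding modidx_def by (simp add: nat_less_iff)
qed

lemma int_modidx: "n > 0 \<Longrightarrow> int (modidx n a) = (a - 1) mod int n + 1"
  unfolding modidx_def by simp

lemma modidx_cong: "a mod int n = b mod int n \<Longrightarrow> modidx n a = modidx n b"
  unfolding modidx_def by (metis mod_diff_left_eq)

lemma modidx_plus: "n > 0 \<Longrightarrow> modidx n (int (modidx n a) + b) = modidx n (a + b)"
proof (rule modidx_cong)
  assume n: "n > 0"
  have "((a - 1) mod int n + (1 + b)) mod int n = ((a - 1) + (1 + b)) mod int n" by (rule mod_add_left_eq)
  then show "(int (modidx n a) + b) mod int n = (a + b) mod int n" using n by (simp add: int_modidx add.assoc)
qed

lemma modidx_minus: "n > 0 \<Longrightarrow> modidx n (int (modidx n a) - b) = modidx n (a - b)"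
proof (rule modidx_cong)
  assume n: "n > 0"
  have "((a - 1) mod int n + (1 - b)) mod int n = ((a - 1) + (1 - b)) mod int n" by (rule mod_add_left_eq)
  then show "(int (modidx n a) - b) mod int n = (a - b) mod int n" using n by (simp add: int_modidx algebra_simps)
qed

lemma modidx_id: "p \<in> {1..n} \<Longrightarrow> modidx n (int p) = p"
  unfolding modidx_def by auto

lemma modidx_self: "p \<in> {1..n} \<Longrightarrow> a mod int n = 0 \<Longrightarrow> modidx n (int p + a) = p"
  by (metis modidx_cong modidx_id add.right_neutral mod_add_right_eq mod_0)

lemma modidx_eq_iff: "n > 0 \<Longrightarrow> modidx n a = modidx n b \<longleftrightarrow> a mod int n = b mod int n"
proof
  assume n: "n > 0" and "modidx n a = modidx n b"
  then have "int (modidx n a) = int (modidx n b)" by simp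
  then have "(a - 1) mod int n = (b - 1) mod int n" using n by (simp add: int_modidx)
  then show "a mod int n = b mod int n" by (metis mod_diff_left_eq diff_add_cancel mod_add_left_eq)
qed (rule modidx_cong)


lemma modidx_mm: "n > 0 \<Longrightarrow> modidx n (int (modidx n a) - b - c) = modidx n (a - b - c)"
  by (metis diff_diff_eq modidx_minus)
lemma jvS: "jv [2,3,2,4,3,Suc 0,Suc 0,4] (Suc 0) = 7" "jv [2,3,2,4,3,Suc 0,Suc 0,4] 2 = 3"
  "jv [2,3,2,4,3,Suc 0,Suc 0,4] 3 = 5" "jv [2,3,2,4,3,Suc 0,Suc 0,4] 4 = 8"
  using jv1 jv2 jv3 jv4 by simp_all

lemma modidx_off_eq: "n > 0 \<Longrightarrow> modidx n (int p + a) = modidx n (int p + b) \<longleftrightarrow> int n dvd (a - b)"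
  by (simp add: modidx_eq_iff mod_eq_dvd_iff)

lemma modidx_off_self: "p \<in> {1..n} \<Longrightarrow> modidx n (int p + a) = p \<longleftrightarrow> int n dvd a"
proof -
  assume p: "p \<in> {1..n}"
  then have n: "n > 0" by auto
  have "p = modidx n (int p + 0)" using modidx_id[OF p] by simp
  then show ?thesis using modidx_off_eq[OF n, of p a 0] by simp
qed

definition pro :: "nat \<Rightarrow> int list \<Rightarrow> int list \<Rightarrow> nat \<Rightarrow> nat \<Rightarrow> nat set" where
  "pro n A B p k = {modidx n (int p + A ! (k - 1)), modidx n (int p + B ! (k - 1))}"

lemma pro_props:
  assumes len: "length A = P" "length B = P"
  and h1: "\<forall>k\<in>set [0..<P]. \<not> int n dvd (A!k - B!k) \<and> \<not> int n dvd A!k \<and> \<not> int n dvd B!k"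
  and h2: "\<forall>k\<in>set [0..<P]. \<forall>k'\<in>set [0..<P]. k \<noteq> k' \<longrightarrow> \<not> int n dvd (A!k - A!k') \<and>
      \<not> int n dvd (A!k - B!k') \<and> \<not> int n dvd (B!k - A!k') \<and> \<not> int n dvd (B!k - B!k')"
  shows "\<And>p k. p \<in> {1..n} \<Longrightarrow> k \<in> {1..P} \<Longrightarrow> pro n A B p k \<subseteq> {1..n} \<and> card (pro n A B p k) = 2 \<and> p \<notin> pro n A B p k"
    and "\<And>p k k'. p \<in> {1..n} \<Longrightarrow> k \<in> {1..P} \<Longrightarrow> k' \<in> {1..P} \<Longrightarrow> k \<noteq> k' \<Longrightarrow> pro n A B p k \<inter> pro n A B p k' = {}"
proof -
  fix p k assume p: "p \<in> {1..n}" and k: "k \<in> {1..P}"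
  have n: "n > 0" using p by auto
  have k1: "k - 1 \<in> set [0..<P]" using k by auto
  have ne: "modidx n (int p + A ! (k - 1)) \<noteq> modidx n (int p + B ! (k - 1))"
    using h1 k1 modidx_off_eq[OF n] by blast
  have na: "modidx n (int p + A ! (k - 1)) \<noteq> p" "modidx n (int p + B ! (k - 1)) \<noteq> p"
    using h1 k1 modidx_off_self[OF p] by blast+
  show "pro n A B p k \<subseteq> {1..n} \<and> card (pro n A B p k) = 2 \<and> p \<notin> pro n A B p k"
    unfolding pro_def using modidx_range[OF n] ne na by auto
next
  fix p k k' assume p: "p \<in> {1..n}" and k: "k \<in> {1..P}" and k': "k' \<in> {1..P}" and kk: "k \<noteq> k'"
  have n: "n > 0" using p by auto
  have k1: "k - 1 \<in> set [0..<P]" "k' - 1 \<in> set [0..<P]" "k - 1 \<noteq> k' - 1" using k k' kk by auto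
  show "pro n A B p k \<inter> pro n A B p k' = {}"
    unfolding pro_def using h2 k1 modidx_off_eq[OF n] by auto
qed

lemma rec1:
  fixes enc :: "nat \<Rightarrow> nat \<Rightarrow> (nat \<Rightarrow> 'a::field) \<Rightarrow> 'a"
  assumes "r \<in> {1..N}" "\<And>x. x p = enc p r x"
  shows "\<exists>a. \<forall>x. x p = (\<Sum>l\<in>{p}. \<Sum>r'=1..N. a l r' * enc l r' x)"
proof (rule exI[of _ "\<lambda>l r'. if r' = r then 1 else 0"], intro allI)
  fix x
  have "(\<Sum>r'=1..N. (if r' = r then 1 else 0) * enc p r' x) = (\<Sum>r'=1..N. if r' = r then enc p r' x else 0)"
    by (intro sum.cong) auto
  also have "\<dots> = enc p r x" using assms(1) by simp
  finally show "x p = (\<Sum>l\<in>{p}. \<Sum>r'=1..N. (\<lambda>l r'. if r' = r then 1 else 0) l r' * enc l r' x)"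
    using assms(2) by simp
qed

lemma rec2:
  fixes enc :: "nat \<Rightarrow> nat \<Rightarrow> (nat \<Rightarrow> 'a::field) \<Rightarrow> 'a"
  assumes ne: "i1 \<noteq> i2" and r: "r1 \<in> {1..N}" "r2 \<in> {1..N}" and e: "\<And>x. x p = enc i1 r1 x - enc i2 r2 x"
  shows "\<exists>a. \<forall>x. x p = (\<Sum>l\<in>{i1,i2}. \<Sum>r=1..N. a l r * enc l r x)"
proof (rule exI[of _ "\<lambda>l r. if l = i1 then (if r = r1 then 1 else 0) else (if r = r2 then -1 else 0)"], intro allI)
  fix x
  have s1: "(\<Sum>r=1..N. (if r = r1 then 1 else 0) * enc i1 r x) = enc i1 r1 x"
  proof -
    have "(\<Sum>r=1..N. (if r = r1 then 1 else 0) * enc i1 r x) = (\<Sum>r=1..N. if r = r1 then enc i1 r x else 0)"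
      by (intro sum.cong) auto
    then show ?thesis using r by simp
  qed
  have s2: "(\<Sum>r=1..N. (if r = r2 then -1 else 0) * enc i2 r x) = - enc i2 r2 x"
  proof -
    have "(\<Sum>r=1..N. (if r = r2 then -1 else 0) * enc i2 r x) = (\<Sum>r=1..N. if r = r2 then - enc i2 r x else 0)"
      by (intro sum.cong) auto
    then show ?thesis using r by simp
  qed
  show "x p = (\<Sum>l\<in>{i1,i2}. \<Sum>r=1..N. (\<lambda>l r. if l = i1 then (if r = r1 then 1 else 0) else (if r = r2 then -1 else 0)) l r * enc l r x)"
    using ne s1 s2 e by simp
qed

lemma lin_pt:
  fixes a n :: nat
  assumes "a \<in> {1..n}"
  shows "\<exists>g. \<forall>x. (x a :: 'a::field) = (\<Sum>i=1..n. g i * x i)"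
proof (rule exI[of _ "\<lambda>i. if i = a then 1 else 0"], intro allI)
  fix x :: "nat \<Rightarrow> 'a"
  have "(\<Sum>i=1..n. (if i = a then 1 else 0) * x i) = (\<Sum>i=1..n. if i = a then x i else 0)"
    by (intro sum.cong) auto
  then show "x a = (\<Sum>i=1..n. (if i = a then 1 else 0) * x i)" using assms by simp
qed

lemma lin_2:
  fixes a b n :: nat
  assumes "a \<in> {1..n}" "b \<in> {1..n}"
  shows "\<exists>g. \<forall>x. (x a + x b :: 'a::field) = (\<Sum>i=1..n. g i * x i)"
proof -
  obtain g1 where g1: "\<forall>x. (x a :: 'a) = (\<Sum>i=1..n. g1 i * x i)" using lin_pt[OF assms(1)] by blast
  obtain g2 where g2: "\<forall>x. (x b :: 'a) = (\<Sum>i=1..n. g2 i * x i)" using lin_pt[OF assms(2)] by blast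
  show ?thesis
  proof (rule exI[of _ "\<lambda>i. g1 i + g2 i"], intro allI)
    fix x :: "nat \<Rightarrow> 'a"
    show "x a + x b = (\<Sum>i=1..n. (g1 i + g2 i) * x i)"
      using g1 g2 by (simp add: distrib_right sum.distrib)
  qed
qed

lemma offs17:
  "\<forall>k\<in>set [0..<8]. \<not> int 17 dvd ([11,10,7,5,9,6,12,8::int]!k - [1,16,2,15,3,14,4,13::int]!k) \<and> \<not> int 17 dvd [11,10,7,5,9,6,12,8::int]!k \<and> \<not> int 17 dvd [1,16,2,15,3,14,4,13::int]!k"
  by code_simp

lemma offs17b:
  "\<forall>k\<in>set [0..<8]. \<forall>k'\<in>set [0..<8]. k \<noteq> k' \<longrightarrow> \<not> int 17 dvd ([11,10,7,5,9,6,12,8::int]!k - [11,10,7,5,9,6,12,8::int]!k') \<and>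
      \<not> int 17 dvd ([11,10,7,5,9,6,12,8::int]!k - [1,16,2,15,3,14,4,13::int]!k') \<and> \<not> int 17 dvd ([1,16,2,15,3,14,4,13::int]!k - [11,10,7,5,9,6,12,8::int]!k') \<and> \<not> int 17 dvd ([1,16,2,15,3,14,4,13::int]!k - [1,16,2,15,3,14,4,13::int]!k')"
  by code_simp



lemma greedy:
  fixes pr :: "nat \<Rightarrow> nat \<Rightarrow> nat set" and c :: "nat \<Rightarrow> nat" and Z :: "nat set" and P :: nat
  assumes pcard: "\<And>p k. p \<in> Z \<Longrightarrow> k \<in> {1..P} \<Longrightarrow> card (pr p k) = 2 \<and> p \<notin> pr p k"
  and pdisj: "\<And>p k k'. p \<in> Z \<Longrightarrow> k \<in> {1..P} \<Longrightarrow> k' \<in> {1..P} \<Longrightarrow> k \<noteq> k' \<Longrightarrow> pr p k \<inter> pr p k' = {}"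
  and fZ: "finite Z"
  shows "finite D \<Longrightarrow> D \<subseteq> Z \<Longrightarrow> (\<forall>p\<in>D. c p \<ge> 1) \<Longrightarrow>
    (D \<noteq> {} \<longrightarrow> card Z + 2 * sum c D \<le> P + 2 * card D + Max (c ` D)) \<Longrightarrow>
    \<exists>K. (\<forall>p\<in>D. K p \<subseteq> {1..P} \<and> card (K p) = c p - 1) \<and> (\<forall>p\<in>D. \<forall>k\<in>K p. pr p k \<inter> Z = {}) \<and>
        (\<forall>p\<in>D. \<forall>q\<in>D. \<forall>k\<in>K p. \<forall>k'\<in>K q. (p,k) \<noteq> (q,k') \<longrightarrow> pr p k \<inter> pr q k' = {})"
proof (induction "card D" arbitrary: D rule: less_induct)
  case less
  show ?case
  proof (cases "D = {}")
    case True then show ?thesis by auto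
  next
    case False
    obtain p where pD: "p \<in> D" and pmax: "c p = Max (c ` D)"
    proof -
      have "Max (c ` D) \<in> c ` D" using Max_in[of "c ` D"] less.prems(1) False by auto
      then show ?thesis using that by auto
    qed
    define D' where "D' = D - {p}"
    have fin': "finite D'" using less.prems D'_def by auto
    have cardD': "card D = card D' + 1" using pD less.prems(1) D'_def
      by (metis Suc_eq_plus1 card.remove)
    have sumD: "sum c D = c p + sum c D'" using pD less.prems(1) D'_def sum.remove by metis
    have cp1: "c p \<ge> 1" using pD less.prems by auto
    have IHcond: "D' \<noteq> {} \<longrightarrow> card Z + 2 * sum c D' \<le> P + 2*card D' + Max (c ` D')"
    proof
      assume ne: "D' \<noteq> {}"
      then obtain q where q: "q \<in> D'" by auto
      have "c q \<le> Max (c ` D')" using fin' q by auto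
      moreover have "c q \<ge> 1" using q less.prems D'_def by auto
      moreover have "card Z + 2 * sum c D \<le> P + 2 * card D + Max (c ` D)" using less.prems False by auto
      ultimately show "card Z + 2 * sum c D' \<le> P + 2*card D' + Max (c ` D')"
        using sumD cardD' pmax cp1 by linarith
    qed
    obtain K' where K'1: "\<forall>q\<in>D'. K' q \<subseteq> {1..P} \<and> card (K' q) = c q - 1"
      and K'2: "\<forall>q\<in>D'. \<forall>k\<in>K' q. pr q k \<inter> Z = {}"
      and K'3: "\<forall>q\<in>D'. \<forall>q'\<in>D'. \<forall>k\<in>K' q. \<forall>k'\<in>K' q'. (q,k) \<noteq> (q',k') \<longrightarrow> pr q k \<inter> pr q' k' = {}"
    proof -
      have "card D' < card D" using cardD' by simp
      moreover have "D' \<subseteq> Z" "\<forall>q\<in>D'. c q \<ge> 1" using less.prems D'_def by auto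
      ultimately show ?thesis using less.hyps[of D'] fin' IHcond that by blast
    qed
    define W where "W = (\<Union>q\<in>D'. \<Union>k\<in>K' q. pr q k)"
    define U where "U = (Z - {p}) \<union> W"
    have "card W \<le> (\<Sum>q\<in>D'. card (\<Union>k\<in>K' q. pr q k))"
      unfolding W_def using fin' by (rule card_UN_le)
    also have "\<dots> \<le> (\<Sum>q\<in>D'. 2 * (c q - 1))"
    proof (rule sum_mono)
      fix q assume q: "q \<in> D'"
      have fK: "finite (K' q)" using K'1 q finite_subset by blast
      have "card (\<Union>k\<in>K' q. pr q k) \<le> (\<Sum>k\<in>K' q. card (pr q k))" using fK by (rule card_UN_le)
      also have "\<dots> = (\<Sum>k\<in>K' q. 2)"
      proof (rule sum.cong)
        fix k assume "k \<in> K' q"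
        moreover have "K' q \<subseteq> {1..P}" using K'1 q by blast
        ultimately have "k \<in> {1..P}" by blast
        moreover have "q \<in> Z" using q less.prems D'_def by auto
        ultimately show "card (pr q k) = 2" using pcard by blast
      qed simp
      also have "\<dots> = 2 * (c q - 1)" using K'1 q by simp
      finally show "card (\<Union>k\<in>K' q. pr q k) \<le> 2 * (c q - 1)" .
    qed
    finally have cW: "card W \<le> (\<Sum>q\<in>D'. 2 * (c q - 1))" .
    have "(\<Sum>q\<in>D'. c q) = (\<Sum>q\<in>D'. (c q - 1) + 1)"
      using less.prems D'_def by (intro sum.cong) auto
    also have "\<dots> = (\<Sum>q\<in>D'. (c q - 1)) + card D'" by (simp only: sum.distrib) simp
    finally have sD': "sum c D' = (\<Sum>q\<in>D'. (c q - 1)) + card D'" .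
    have cW2: "card W + 2 * card D' \<le> 2 * sum c D'" using cW sD' by (simp add: sum_distrib_left)
    have pZ: "p \<in> Z" using pD less.prems by auto
    have fW: "finite W" unfolding W_def
    proof (intro finite_UN_I fin')
      fix q k assume q: "q \<in> D'"
      then show "finite (K' q)" using K'1 finite_subset by blast
      assume k: "k \<in> K' q"
      have "K' q \<subseteq> {1..P}" using K'1 q by blast
      then have "k \<in> {1..P}" using k by blast
      moreover have "q \<in> Z" using q less.prems D'_def by auto
      ultimately have "card (pr q k) = 2" using pcard by blast
      then show "finite (pr q k)" by (intro card_ge_0_finite) simp
    qed
    have fU: "finite U" using fW fZ U_def by auto
    have cU: "card U \<le> card Z - 1 + card W"
      unfolding U_def using card_Un_le[of "Z - {p}" W] pZ fZ by (simp add: card_Diff_singleton)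
    have pU: "p \<notin> U" unfolding U_def W_def using K'2 pZ by auto
    define B where "B = {k\<in>{1..P}. pr p k \<inter> U \<noteq> {}}"
    define f where "f k = (SOME u. u \<in> pr p k \<inter> U)" for k
    have fB: "\<And>k. k \<in> B \<Longrightarrow> f k \<in> pr p k \<inter> U"
    proof -
      fix k assume "k \<in> B"
      then have "\<exists>u. u \<in> pr p k \<inter> U" unfolding B_def by auto
      then show "f k \<in> pr p k \<inter> U" unfolding f_def by (rule someI_ex)
    qed
    have "inj_on f B"
    proof (rule inj_onI)
      fix k k' assume k: "k \<in> B" and k': "k' \<in> B" and e: "f k = f k'"
      show "k = k'"
      proof (rule ccontr)
        assume "k \<noteq> k'"
        then have "pr p k \<inter> pr p k' = {}" using pdisj pZ k k' B_def by auto
        then show False using fB[OF k] fB[OF k'] e by auto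
      qed
    qed
    moreover have "f ` B \<subseteq> U" using fB by auto
    ultimately have cB: "card B \<le> card U" using card_inj_on_le fU by blast
    define F0 where "F0 = {1..P} - B"
    have Bsub: "B \<subseteq> {1..P}" unfolding B_def by auto
    have "card F0 = P - card B" unfolding F0_def
      using card_Diff_subset[OF finite_subset[OF Bsub] Bsub] by simp
    moreover have "card Z + 2 * sum c D \<le> P + 2 * card D + Max (c ` D)" using less.prems False by auto
    moreover have "card Z \<ge> 1" using pZ fZ card_0_eq by fastforce
    ultimately have "c p - 1 \<le> card F0" using cB cU cW2 sumD cardD' pmax cp1 by linarith
    then obtain F where FF0: "F \<subseteq> F0" and cF: "card F = c p - 1" using obtain_subset_with_card_n by metis
    have Ffree: "\<And>k. k \<in> F \<Longrightarrow> k \<in> {1..P} \<and> pr p k \<inter> U = {}"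
      using FF0 unfolding F0_def B_def by auto
    define K where "K = K'(p := F)"
    have KD': "\<And>q. q \<in> D' \<Longrightarrow> K q = K' q" unfolding K_def D'_def by auto
    have Kp: "K p = F" unfolding K_def by simp
    have Dsplit: "D = insert p D'" using pD D'_def by auto
    have A1: "\<forall>q\<in>D. K q \<subseteq> {1..P} \<and> card (K q) = c q - 1"
      using Dsplit KD' Kp K'1 cF Ffree by auto
    have A2: "\<forall>q\<in>D. \<forall>k\<in>K q. pr q k \<inter> Z = {}"
    proof (intro ballI)
      fix q k assume q: "q \<in> D" and k: "k \<in> K q"
      show "pr q k \<inter> Z = {}"
      proof (cases "q = p")
        case True
        then have "k \<in> F" using k Kp by simp
        then show ?thesis using Ffree[of k] pcard[of p k] pZ True unfolding U_def by auto
      next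
        case False
        then show ?thesis using K'2 KD' q k Dsplit by auto
      qed
    qed
    have Wsub: "\<And>q k. q \<in> D' \<Longrightarrow> k \<in> K' q \<Longrightarrow> pr q k \<subseteq> U" unfolding U_def W_def by auto
    have A3: "\<forall>q\<in>D. \<forall>q'\<in>D. \<forall>k\<in>K q. \<forall>k'\<in>K q'. (q,k) \<noteq> (q',k') \<longrightarrow> pr q k \<inter> pr q' k' = {}"
    proof (intro ballI impI)
      fix q q' k k' assume q: "q \<in> D" and q': "q' \<in> D" and k: "k \<in> K q" and k': "k' \<in> K q'"
        and ne: "(q,k) \<noteq> (q',k')"
      consider "q = p" "q' = p" | "q = p" "q' \<noteq> p" | "q \<noteq> p" "q' = p" | "q \<noteq> p" "q' \<noteq> p" by blast
      then show "pr q k \<inter> pr q' k' = {}"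
      proof cases
        case 1
        then show ?thesis using pdisj[of p k k'] pZ Ffree k k' Kp ne by auto
      next
        case 2
        then have "q' \<in> D'" "k' \<in> K' q'" using q' k' KD' D'_def by auto
        then show ?thesis using Wsub Ffree[of k] k Kp 2 by blast
      next
        case 3
        then have "q \<in> D'" "k \<in> K' q" using q k KD' D'_def by auto
        then show ?thesis using Wsub Ffree[of k'] k' Kp 3 by blast
      next
        case 4
        then show ?thesis using K'3 q q' k k' KD' D'_def ne by auto
      qed
    qed
    show ?thesis using A1 A2 A3 by blast
  qed
qed

lemma rank_lt:
  assumes "j < length xs"
  shows "count_list (take j xs) (xs ! j) < count_list xs (xs ! j)"
proof -
  have "xs = take j xs @ (xs ! j) # drop (Suc j) xs" using assms
    by (simp add: id_take_nth_drop)
  then have "count_list xs (xs ! j) = count_list (take j xs) (xs ! j) + 1 + count_list (drop (Suc j) xs) (xs ! j)"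
    by (metis count_list.simps(2) count_list_append add.assoc add.commute)
  then show ?thesis by simp
qed

lemma rank_mono:
  assumes "j < j'" "j' < length xs" "xs ! j = xs ! j'"
  shows "count_list (take j xs) (xs ! j) < count_list (take j' xs) (xs ! j')"
proof -
  have "take j' xs = take (Suc j) xs @ drop (Suc j) (take j' xs)"
    using assms by (metis append_take_drop_id min.absorb1 Suc_leI take_take)
  then have "count_list (take j' xs) (xs ! j) \<ge> count_list (take (Suc j) xs) (xs ! j)"
    by (metis count_list_append le_add1)
  moreover have "take (Suc j) xs = take j xs @ [xs ! j]" using assms by (simp add: take_Suc_conv_app_nth)
  ultimately show ?thesis using assms(3) by simp
qed

lemma assemble:
  fixes n N kk P :: nat and Nsz :: "nat \<Rightarrow> nat" and enc :: "nat \<Rightarrow> nat \<Rightarrow> (nat \<Rightarrow> 'a::field) \<Rightarrow> 'a"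
    and pr :: "nat \<Rightarrow> nat \<Rightarrow> nat set"
  assumes hN: "\<forall>l\<in>{1..n}. Nsz l \<ge> 1" and hS: "(\<Sum>l=1..n. Nsz l) = N"
  and lin: "\<forall>l\<in>{1..n}. \<forall>r\<in>{1..Nsz l}. \<exists>g::nat\<Rightarrow>'a. \<forall>x. enc l r x = (\<Sum>i=1..n. g i * x i)"
  and kpos: "kk \<ge> 1"
  and single: "\<And>p. p \<in> {1..n} \<Longrightarrow> \<exists>a. \<forall>x. x p = (\<Sum>l\<in>{p}. \<Sum>r=1..Nsz l. a l r * enc l r x)"
  and pairrec: "\<And>p k. p \<in> {1..n} \<Longrightarrow> k \<in> {1..P} \<Longrightarrow>
      \<exists>a. \<forall>x. x p = (\<Sum>l\<in>pr p k. \<Sum>r=1..Nsz l. a l r * enc l r x)"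
  and prsub: "\<And>p k. p \<in> {1..n} \<Longrightarrow> k \<in> {1..P} \<Longrightarrow> pr p k \<subseteq> {1..n} \<and> card (pr p k) = 2 \<and> p \<notin> pr p k"
  and prdisj: "\<And>p k k'. p \<in> {1..n} \<Longrightarrow> k \<in> {1..P} \<Longrightarrow> k' \<in> {1..P} \<Longrightarrow> k \<noteq> k' \<Longrightarrow> pr p k \<inter> pr p k' = {}"
  and arith: "\<And>d m. kk \<le> d*m \<Longrightarrow> kk + kk \<le> P + d + m"
  shows "is_BAC n N kk n Nsz enc"
  unfolding is_BAC_def
proof (intro conjI hN hS lin allI impI)
  fix idx :: "nat list"
  assume "length idx = kk \<and> set idx \<subseteq> {1..n}"
  then have len: "length idx = kk" and sidx: "set idx \<subseteq> {1..n}" by auto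
  define D where "D = set idx"
  define c where "c = count_list idx"
  have fD: "finite D" unfolding D_def by simp
  have c1: "\<forall>p\<in>D. c p \<ge> 1" unfolding D_def c_def
    by (metis Suc_leI count_list_0_iff gr0I One_nat_def)
  have sumc: "sum c D = kk" unfolding c_def D_def using sum_count_set[of idx "set idx"] len by simp
  have cond: "D \<noteq> {} \<longrightarrow> card D + 2 * sum c D \<le> P + 2 * card D + Max (c ` D)"
  proof
    assume "D \<noteq> {}"
    have "sum c D \<le> card D * Max (c ` D)"
      using sum_bounded_above[of D c "Max (c ` D)"] fD by simp
    then have "kk \<le> card D * Max (c ` D)" using sumc by simp
    then have "kk + kk \<le> P + card D + Max (c ` D)" by (rule arith)
    then show "card D + 2 * sum c D \<le> P + 2 * card D + Max (c ` D)" using sumc by simp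
  qed
  have DZ: "D \<subseteq> {1..n}" using sidx D_def by simp
  obtain K where K1: "\<forall>p\<in>D. K p \<subseteq> {1..P} \<and> card (K p) = c p - 1"
    and K2: "\<forall>p\<in>D. \<forall>k\<in>K p. pr p k \<inter> D = {}"
    and K3: "\<forall>p\<in>D. \<forall>q\<in>D. \<forall>k\<in>K p. \<forall>k'\<in>K q. (p,k) \<noteq> (q,k') \<longrightarrow> pr p k \<inter> pr q k' = {}"
  proof -
    have "\<And>p k. p \<in> D \<Longrightarrow> k \<in> {1..P} \<Longrightarrow> card (pr p k) = 2 \<and> p \<notin> pr p k"
      using prsub DZ by blast
    moreover have "\<And>p k k'. p \<in> D \<Longrightarrow> k \<in> {1..P} \<Longrightarrow> k' \<in> {1..P} \<Longrightarrow> k \<noteq> k' \<Longrightarrow> pr p k \<inter> pr p k' = {}"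
      using prdisj DZ by blast
    ultimately show ?thesis using greedy[of D P pr D c] fD c1 cond that by blast
  qed
  define rk where "rk j = count_list (take j idx) (idx ! j)" for j
  define sl where "sl p = sorted_list_of_set (K p)" for p
  define S where "S j = (if rk j = 0 then {idx ! j} else pr (idx ! j) (sl (idx ! j) ! (rk j - 1)))" for j
  define L where "L = {1..n} - (\<Union>j<kk. S j)"
  define R where "R j = (if j = 0 then S 0 \<union> L else S j)" for j
  have inD: "\<And>j. j < kk \<Longrightarrow> idx ! j \<in> D" unfolding D_def using len by simp
  have rklt: "rk j - 1 < length (sl (idx ! j))" if r: "rk j > 0" and j: "j < kk" for j
  proof -
    have "rk j < c (idx ! j)" unfolding rk_def c_def using rank_lt[of j idx] j len by simp
    moreover have "length (sl (idx ! j)) = c (idx ! j) - 1"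
      unfolding sl_def using K1 inD[OF j] by simp
    ultimately show "rk j - 1 < length (sl (idx ! j))" using r by linarith
  qed
  have kin: "\<And>j. j < kk \<Longrightarrow> rk j > 0 \<Longrightarrow> sl (idx ! j) ! (rk j - 1) \<in> K (idx ! j)"
  proof -
    fix j assume j: "j < kk" and r: "rk j > 0"
    have fK: "finite (K (idx ! j))" using K1 inD[OF j] finite_subset by blast
    show "sl (idx ! j) ! (rk j - 1) \<in> K (idx ! j)"
      using nth_mem[OF rklt[OF r j]] fK unfolding sl_def by simp
  qed
  have kP: "\<And>j. j < kk \<Longrightarrow> rk j > 0 \<Longrightarrow> sl (idx ! j) ! (rk j - 1) \<in> {1..P}"
    using kin K1 inD by blast
  have prS: "pr (idx ! j) (sl (idx ! j) ! (rk j - 1)) \<subseteq> {1..n} \<and> idx ! j \<notin> pr (idx ! j) (sl (idx ! j) ! (rk j - 1))"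
    if j: "j < kk" and r: "rk j > 0" for j
  proof -
    have "idx ! j \<in> {1..n}" using inD[OF j] DZ by blast
    then show ?thesis using prsub[OF _ kP[OF j r]] by blast
  qed
  have Ssub: "\<And>j. j < kk \<Longrightarrow> S j \<subseteq> {1..n}"
  proof -
    fix j assume j: "j < kk"
    show "S j \<subseteq> {1..n}"
    proof (cases "rk j = 0")
      case True then show ?thesis using S_def inD[OF j] DZ by auto
    next
      case False then show ?thesis using S_def prS[OF j] by auto
    qed
  qed
  have Sdisj_lt: "S j \<inter> S j' = {}" if jj: "j < j'" "j' < kk" for j j'
  proof -
    have j: "j < kk" using jj by simp
    have j': "j' < kk" using jj by simp
    let ?p = "idx ! j" and ?q = "idx ! j'"
    have pD: "?p \<in> D" and qD: "?q \<in> D" using inD j j' by auto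
    show ?thesis
    proof (cases "?p = ?q")
      case True
      have rr: "rk j < rk j'" unfolding rk_def using rank_mono[of j j' idx] jj len True by simp
      then have r': "rk j' > 0" by simp
      show ?thesis
      proof (cases "rk j = 0")
        case True
        then show ?thesis using S_def r' prS[OF j' r'] \<open>?p = ?q\<close> by auto
      next
        case False
        then have r: "rk j > 0" by simp
        have "sl ?p ! (rk j - 1) \<noteq> sl ?q ! (rk j' - 1)"
        proof -
          have "distinct (sl ?p)" unfolding sl_def by simp
          moreover have "rk j - 1 \<noteq> rk j' - 1" using rr r by simp
          ultimately show ?thesis using nth_eq_iff_index_eq rklt[OF r j] rklt[OF r' j'] \<open>?p = ?q\<close> by metis
        qed
        then have "pr ?p (sl ?p ! (rk j - 1)) \<inter> pr ?p (sl ?q ! (rk j' - 1)) = {}"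
        proof -
          have "?p \<in> {1..n}" using pD DZ by blast
          from prdisj[OF this kP[OF j r]] show ?thesis using kP[OF j' r'] \<open>?p = ?q\<close> \<open>sl ?p ! (rk j - 1) \<noteq> sl ?q ! (rk j' - 1)\<close> by metis
        qed
        then show ?thesis using S_def r r' \<open>?p = ?q\<close> by auto
      qed
    next
      case False
      show ?thesis
      proof (cases "rk j = 0"; cases "rk j' = 0")
        assume "rk j = 0" "rk j' = 0"
        then show ?thesis using S_def False by auto
      next
        assume a: "rk j = 0" "rk j' \<noteq> 0"
        then have "pr ?q (sl ?q ! (rk j' - 1)) \<inter> D = {}" using K2 qD kin[OF j'] by auto
        then show ?thesis using S_def a pD by auto
      next
        assume a: "rk j \<noteq> 0" "rk j' = 0"
        then have "pr ?p (sl ?p ! (rk j - 1)) \<inter> D = {}" using K2 pD kin[OF j] by auto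
        then show ?thesis using S_def a qD by auto
      next
        assume a: "rk j \<noteq> 0" "rk j' \<noteq> 0"
        then have "pr ?p (sl ?p ! (rk j - 1)) \<inter> pr ?q (sl ?q ! (rk j' - 1)) = {}"
          using K3 pD qD kin[OF j] kin[OF j'] False by auto
        then show ?thesis using S_def a by auto
      qed
    qed
  qed
  have Sdisj: "\<And>j j'. j < kk \<Longrightarrow> j' < kk \<Longrightarrow> j \<noteq> j' \<Longrightarrow> S j \<inter> S j' = {}"
    by (metis Sdisj_lt Int_commute linorder_neqE_nat)
  have Srec: "\<exists>a. \<forall>x. x (idx ! j) = (\<Sum>l\<in>S j. \<Sum>r=1..Nsz l. a l r * enc l r x)" if j: "j < kk" for j
  proof (cases "rk j = 0")
    case True then show ?thesis using single inD[OF j] DZ S_def by auto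
  next
    case False then show ?thesis using pairrec[OF _ kP[OF j]] inD[OF j] DZ S_def by auto
  qed
  have k0: "0 < kk" using kpos by simp
  show "\<exists>R. (\<forall>j<kk. R j \<subseteq> {1..n}) \<and> (\<forall>j<kk. \<forall>j'<kk. j \<noteq> j' \<longrightarrow> R j \<inter> R j' = {}) \<and>
           (\<Union>j<kk. R j) = {1..n} \<and>
           (\<forall>j<kk. \<exists>a. \<forall>x. x (idx ! j) = (\<Sum>l\<in>R j. \<Sum>r = 1..Nsz l. a l r * enc l r x))"
  proof (rule exI[of _ R], intro conjI allI impI)
    fix j assume j: "j < kk"
    show "R j \<subseteq> {1..n}" using Ssub[OF j] Ssub[OF k0] L_def R_def by auto
  next
    fix j j' assume j: "j < kk" and j': "j' < kk" and ne: "j \<noteq> j'"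
    have LS: "\<And>i. i < kk \<Longrightarrow> L \<inter> S i = {}" unfolding L_def by auto
    show "R j \<inter> R j' = {}"
      using Sdisj[OF j j' ne] LS[OF j] LS[OF j'] ne unfolding R_def by auto
  next
    have "(\<Union>j<kk. R j) = (\<Union>j<kk. S j) \<union> L"
    proof
      show "(\<Union>j<kk. R j) \<subseteq> (\<Union>j<kk. S j) \<union> L" unfolding R_def using k0 by auto
      show "(\<Union>j<kk. S j) \<union> L \<subseteq> (\<Union>j<kk. R j)"
      proof
        fix u assume "u \<in> (\<Union>j<kk. S j) \<union> L"
        then show "u \<in> (\<Union>j<kk. R j)"
        proof
          assume "u \<in> (\<Union>j<kk. S j)"
          then obtain i where "i < kk" "u \<in> S i" by auto
          then show ?thesis unfolding R_def by (cases "i = 0") auto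
        next
          assume "u \<in> L" then show ?thesis unfolding R_def using k0 by auto
        qed
      qed
    qed
    also have "\<dots> = {1..n}" unfolding L_def using Ssub by auto
    finally show "(\<Union>j<kk. R j) = {1..n}" .
  next
    fix j assume j: "j < kk"
    show "\<exists>a. \<forall>x. x (idx ! j) = (\<Sum>l\<in>R j. \<Sum>r = 1..Nsz l. a l r * enc l r x)"
    proof (cases "j = 0")
      case False then show ?thesis using Srec[OF j] R_def by simp
    next
      case True
      obtain a where a: "\<forall>x. x (idx ! 0) = (\<Sum>l\<in>S 0. \<Sum>r=1..Nsz l. a l r * enc l r x)"
        using Srec[OF k0] by blast
      define a' where "a' l r = (if l \<in> S 0 then a l r else 0)" for l r
      have fin: "finite (S 0 \<union> L)" using Ssub[OF k0] L_def finite_subset by auto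
      have "\<forall>x. x (idx ! 0) = (\<Sum>l\<in>S 0 \<union> L. \<Sum>r=1..Nsz l. a' l r * enc l r x)"
      proof
        fix x
        have "(\<Sum>l\<in>S 0 \<union> L. \<Sum>r=1..Nsz l. a' l r * enc l r x) = (\<Sum>l\<in>S 0. \<Sum>r=1..Nsz l. a l r * enc l r x)"
          by (rule sum.mono_neutral_cong_right[OF fin]) (auto simp: a'_def)
        then show "x (idx ! 0) = (\<Sum>l\<in>S 0 \<union> L. \<Sum>r=1..Nsz l. a' l r * enc l r x)" using a by simp
      qed
      then show ?thesis using True R_def by auto
    qed
  qed
qed



lemma modidx_red: "int n \<le> c \<Longrightarrow> modidx n (a + c) = modidx n (a + (c - int n))"
  by (rule modidx_cong) (simp add: mod_eq_dvd_iff)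
lemma modidx_negm: "0 < c \<Longrightarrow> c \<le> int n \<Longrightarrow> modidx n (a - c) = modidx n (a + (int n - c))"
  by (rule modidx_cong) (simp add: mod_eq_dvd_iff)

lemma amgm: "4*(d*m) \<le> (d+m)*(d+m::nat)"
proof -
  have "0 \<le> (int d - int m)^2" by simp
  then have "int (4*(d*m)) \<le> int ((d+m)*(d+m))" by (simp add: power2_eq_square algebra_simps)
  then show ?thesis by linarith
qed

lemma arith_gen: "kk \<le> d*m \<Longrightarrow> (2*kk - P - 1)*(2*kk - P - 1) < 4 * kk \<Longrightarrow> kk + kk \<le> P + d + (m::nat)"
proof (rule ccontr)
  assume a: "kk \<le> d*m" "(2*kk - P - 1)*(2*kk - P - 1) < 4 * kk" "\<not> kk + kk \<le> P + d + m"
  have "d + m \<le> 2*kk - P - 1" using a(3) by presburger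
  then have "(d+m)*(d+m) \<le> (2*kk - P - 1)*(2*kk - P - 1)" using mult_le_mono by blast
  then have "4*(d*m) < 4*kk" using amgm[of d m] a(2) by linarith
  then show False using a(1) by linarith
qed

lemma modidx_swap: "modidx n (c + int p) = modidx n (int p + c)" by (simp add: add.commute)

lemmas msimps = modidx_swap modidx_mm modidx_minus modidx_plus modidx_self modidx_id modidx_red modidx_negm

lemma part1: "is_BAC 5 10 3 5 (\<lambda>_. 2) (code5 :: nat \<Rightarrow> nat \<Rightarrow> (nat \<Rightarrow> 'a::field) \<Rightarrow> 'a)"
proof (rule assemble[where P = 2 and pr = "pro 5 [3,2] [1,4]"])
  show "\<forall>l\<in>{1..5}. \<forall>r\<in>{1..2}. \<exists>g::nat\<Rightarrow>'a. \<forall>x. code5 l r x = (\<Sum>i=1..5. g i * x i)"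
  proof (intro ballI)
    fix l r :: nat assume l: "l \<in> {1..5}" and r: "r \<in> {1..2}"
    then consider "r = 1" | "r = 2" by fastforce
    then show "\<exists>g::nat\<Rightarrow>'a. \<forall>x. code5 l r x = (\<Sum>i=1..5. g i * x i)"
    proof cases
      case 1 then show ?thesis using lin_pt[OF l] by (simp add: code5_def)
    next
      case 2 then show ?thesis using lin_2[OF modidx_range modidx_range, of 5 "int l + 2" "int l + 3"]
        by (simp add: code5_def)
    qed
  qed
next
  fix p :: nat assume p: "p \<in> {1..5}"
  show "\<exists>a. \<forall>x. x p = (\<Sum>l\<in>{p}. \<Sum>r=1..2. a l r * (code5 l r x :: 'a))"
    by (rule rec1[of 1]) (auto simp: code5_def)
next
  fix p k :: nat assume p: "p \<in> {1..5}" and k: "k \<in> {1..2}"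
  then consider "k = 1" | "k = 2" by fastforce
  then show "\<exists>a. \<forall>x. x p = (\<Sum>l\<in>pro 5 [3,2] [1,4] p k. \<Sum>r=1..2. a l r * (code5 l r x :: 'a))"
  proof cases
    case 1
    have "pro 5 [3,2] [1,4] p k = {modidx 5 (int p + 3), modidx 5 (int p + 1)}" using 1 by (simp add: pro_def)
    moreover have "\<exists>a. \<forall>x. x p = (\<Sum>l\<in>{modidx 5 (int p + 3), modidx 5 (int p + 1)}. \<Sum>r=1..2. a l r * (code5 l r x :: 'a))"
      by (rule rec2[of _ _ 2 _ 1]) (use p in \<open>auto simp: modidx_off_eq code5_def msimps\<close>)
    ultimately show ?thesis by simp
  next
    case 2
    have "pro 5 [3,2] [1,4] p k = {modidx 5 (int p + 2), modidx 5 (int p + 4)}" using 2 by (simp add: pro_def)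
    moreover have "\<exists>a. \<forall>x. x p = (\<Sum>l\<in>{modidx 5 (int p + 2), modidx 5 (int p + 4)}. \<Sum>r=1..2. a l r * (code5 l r x :: 'a))"
      by (rule rec2[of _ _ 2 _ 1]) (use p in \<open>auto simp: modidx_off_eq code5_def msimps\<close>)
    ultimately show ?thesis by simp
  qed
next
  have h1: "\<forall>k\<in>set [0..<2]. \<not> int 5 dvd ([3,2::int]!k - [1,4::int]!k) \<and> \<not> int 5 dvd [3,2::int]!k \<and> \<not> int 5 dvd [1,4::int]!k"
    by code_simp
  have h2: "\<forall>k\<in>set [0..<2]. \<forall>k'\<in>set [0..<2]. k \<noteq> k' \<longrightarrow> \<not> int 5 dvd ([3,2::int]!k - [3,2::int]!k') \<and>
      \<not> int 5 dvd ([3,2::int]!k - [1,4::int]!k') \<and> \<not> int 5 dvd ([1,4::int]!k - [3,2::int]!k') \<and> \<not> int 5 dvd ([1,4::int]!k - [1,4::int]!k')"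
    by code_simp
  note pp = pro_props[of "[3,2]" 2 "[1,4]" 5, OF _ _ h1 h2]
  show "\<And>p k. p \<in> {1..5} \<Longrightarrow> k \<in> {1..2} \<Longrightarrow> pro 5 [3,2] [1,4] p k \<subseteq> {1..5} \<and> card (pro 5 [3,2] [1,4] p k) = 2 \<and> p \<notin> pro 5 [3,2] [1,4] p k"
    using pp(1) by simp
  show "\<And>p k k'. p \<in> {1..5} \<Longrightarrow> k \<in> {1..2} \<Longrightarrow> k' \<in> {1..2} \<Longrightarrow> k \<noteq> k' \<Longrightarrow> pro 5 [3,2] [1,4] p k \<inter> pro 5 [3,2] [1,4] p k' = {}"
    using pp(2) by simp
next
  fix d m :: nat assume "3 \<le> d * m"
  then show "3 + 3 \<le> 2 + d + m"
    by (rule arith_gen) simp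
qed auto



lemma part2: "is_BAC 17 85 7 17 (\<lambda>_. 5) (constrC 17 4 [2,3,2,4,3,1,1,4] :: nat \<Rightarrow> nat \<Rightarrow> (nat \<Rightarrow> 'a::field) \<Rightarrow> 'a)"
  (is "is_BAC _ _ _ _ _ ?C")
proof (rule assemble[where P = 8 and pr = "pro 17 [11,10,7,5,9,6,12,8] [1,16,2,15,3,14,4,13]"])
  let ?A = "[11,10,7,5,9,6,12,8::int]" and ?B = "[1,16,2,15,3,14,4,13::int]"
  have L2: "\<And>a b. \<exists>g::nat\<Rightarrow>'a. \<forall>x. x (modidx 17 a) + x (modidx 17 b) = (\<Sum>i=1..17. g i * x i)"
    by (rule lin_2[OF modidx_range modidx_range]) simp_all
  show "\<forall>l\<in>{1..17}. \<forall>r\<in>{1..5}. \<exists>g::nat\<Rightarrow>'a. \<forall>x. ?C l r x = (\<Sum>i=1..17. g i * x i)"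
  proof (intro ballI)
    fix l r :: nat assume l: "l \<in> {1..17}" and r: "r \<in> {1..5}"
    show "\<exists>g::nat\<Rightarrow>'a. \<forall>x. ?C l r x = (\<Sum>i=1..17. g i * x i)"
    proof (cases "r = 1")
      case True then show ?thesis using lin_pt[OF l] by (simp add: constrC_def)
    next
      case False then show ?thesis using L2 r by (auto simp: constrC_def Let_def)
    qed
  qed
next
  fix p :: nat assume p: "p \<in> {1..17}"
  show "\<exists>a. \<forall>x. x p = (\<Sum>l\<in>{p}. \<Sum>r=1..5. a l r * (?C l r x :: 'a))"
    by (rule rec1[of 1]) (auto simp: constrC_def)
next
  let ?A = "[11,10,7,5,9,6,12,8::int]" and ?B = "[1,16,2,15,3,14,4,13::int]"
  fix p k :: nat assume p: "p \<in> {1..17}" and k: "k \<in> {1..8}"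
  then consider "k = 1" | "k = 2" | "k = 3" | "k = 4" | "k = 5" | "k = 6" | "k = 7" | "k = 8" by fastforce
  then show "\<exists>a. \<forall>x. x p = (\<Sum>l\<in>pro 17 ?A ?B p k. \<Sum>r=1..5. a l r * (?C l r x :: 'a))"
  proof cases
    case 1
    have "pro 17 ?A ?B p k = {modidx 17 (int p + 11), modidx 17 (int p + 1)}" using 1 by (simp add: pro_def)
    moreover have "\<exists>a. \<forall>x. x p = (\<Sum>l\<in>{modidx 17 (int p + 11), modidx 17 (int p + 1)}. \<Sum>r=1..5. a l r * (?C l r x :: 'a))"
      by (rule rec2[of _ _ 2 _ 1]) (use p in \<open>auto simp: modidx_off_eq constrC_def Let_def jvS msimps\<close>)
    ultimately show ?thesis by simp
  next
    case 2
    have "pro 17 ?A ?B p k = {modidx 17 (int p + 10), modidx 17 (int p + 16)}" using 2 by (simp add: pro_def)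
    moreover have "\<exists>a. \<forall>x. x p = (\<Sum>l\<in>{modidx 17 (int p + 10), modidx 17 (int p + 16)}. \<Sum>r=1..5. a l r * (?C l r x :: 'a))"
      by (rule rec2[of _ _ 2 _ 1]) (use p in \<open>auto simp: modidx_off_eq constrC_def Let_def jvS msimps\<close>)
    ultimately show ?thesis by simp
  next
    case 3
    have "pro 17 ?A ?B p k = {modidx 17 (int p + 7), modidx 17 (int p + 2)}" using 3 by (simp add: pro_def)
    moreover have "\<exists>a. \<forall>x. x p = (\<Sum>l\<in>{modidx 17 (int p + 7), modidx 17 (int p + 2)}. \<Sum>r=1..5. a l r * (?C l r x :: 'a))"
      by (rule rec2[of _ _ 3 _ 1]) (use p in \<open>auto simp: modidx_off_eq constrC_def Let_def jvS msimps\<close>)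
    ultimately show ?thesis by simp
  next
    case 4
    have "pro 17 ?A ?B p k = {modidx 17 (int p + 5), modidx 17 (int p + 15)}" using 4 by (simp add: pro_def)
    moreover have "\<exists>a. \<forall>x. x p = (\<Sum>l\<in>{modidx 17 (int p + 5), modidx 17 (int p + 15)}. \<Sum>r=1..5. a l r * (?C l r x :: 'a))"
      by (rule rec2[of _ _ 3 _ 1]) (use p in \<open>auto simp: modidx_off_eq constrC_def Let_def jvS msimps\<close>)
    ultimately show ?thesis by simp
  next
    case 5
    have "pro 17 ?A ?B p k = {modidx 17 (int p + 9), modidx 17 (int p + 3)}" using 5 by (simp add: pro_def)
    moreover have "\<exists>a. \<forall>x. x p = (\<Sum>l\<in>{modidx 17 (int p + 9), modidx 17 (int p + 3)}. \<Sum>r=1..5. a l r * (?C l r x :: 'a))"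
      by (rule rec2[of _ _ 4 _ 1]) (use p in \<open>auto simp: modidx_off_eq constrC_def Let_def jvS msimps\<close>)
    ultimately show ?thesis by simp
  next
    case 6
    have "pro 17 ?A ?B p k = {modidx 17 (int p + 6), modidx 17 (int p + 14)}" using 6 by (simp add: pro_def)
    moreover have "\<exists>a. \<forall>x. x p = (\<Sum>l\<in>{modidx 17 (int p + 6), modidx 17 (int p + 14)}. \<Sum>r=1..5. a l r * (?C l r x :: 'a))"
      by (rule rec2[of _ _ 4 _ 1]) (use p in \<open>auto simp: modidx_off_eq constrC_def Let_def jvS msimps\<close>)
    ultimately show ?thesis by simp
  next
    case 7
    have "pro 17 ?A ?B p k = {modidx 17 (int p + 12), modidx 17 (int p + 4)}" using 7 by (simp add: pro_def)
    moreover have "\<exists>a. \<forall>x. x p = (\<Sum>l\<in>{modidx 17 (int p + 12), modidx 17 (int p + 4)}. \<Sum>r=1..5. a l r * (?C l r x :: 'a))"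
      by (rule rec2[of _ _ 5 _ 1]) (use p in \<open>auto simp: modidx_off_eq constrC_def Let_def jvS msimps\<close>)
    ultimately show ?thesis by simp
  next
    case 8
    have "pro 17 ?A ?B p k = {modidx 17 (int p + 8), modidx 17 (int p + 13)}" using 8 by (simp add: pro_def)
    moreover have "\<exists>a. \<forall>x. x p = (\<Sum>l\<in>{modidx 17 (int p + 8), modidx 17 (int p + 13)}. \<Sum>r=1..5. a l r * (?C l r x :: 'a))"
      by (rule rec2[of _ _ 5 _ 1]) (use p in \<open>auto simp: modidx_off_eq constrC_def Let_def jvS msimps\<close>)
    ultimately show ?thesis by simp
  qed
next
  note pp = pro_props[of "[11,10,7,5,9,6,12,8]" 8 "[1,16,2,15,3,14,4,13]" 17, OF _ _ offs17 offs17b]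
  show "\<And>p k. p \<in> {1..17} \<Longrightarrow> k \<in> {1..8} \<Longrightarrow> pro 17 [11,10,7,5,9,6,12,8] [1,16,2,15,3,14,4,13] p k \<subseteq> {1..17} \<and> card (pro 17 [11,10,7,5,9,6,12,8] [1,16,2,15,3,14,4,13] p k) = 2 \<and> p \<notin> pro 17 [11,10,7,5,9,6,12,8] [1,16,2,15,3,14,4,13] p k"
    using pp(1) by simp
  show "\<And>p k k'. p \<in> {1..17} \<Longrightarrow> k \<in> {1..8} \<Longrightarrow> k' \<in> {1..8} \<Longrightarrow> k \<noteq> k' \<Longrightarrow> pro 17 [11,10,7,5,9,6,12,8] [1,16,2,15,3,14,4,13] p k \<inter> pro 17 [11,10,7,5,9,6,12,8] [1,16,2,15,3,14,4,13] p k' = {}"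
    using pp(2) by simp
next
  fix d m :: nat assume "7 \<le> d * m"
  then show "7 + 7 \<le> 8 + d + m"
    by (rule arith_gen) simp
qed auto


theorem corollary4p8:
  shows "is_BAC 5 10 3 5 (\<lambda>_. 2) (code5 :: nat \<Rightarrow> nat \<Rightarrow> (nat \<Rightarrow> 'a::{field,finite}) \<Rightarrow> 'a)
       \<and> is_BAC 17 85 7 17 (\<lambda>_. 5)
           (constrC 17 4 [2,3,2,4,3,1,1,4] :: nat \<Rightarrow> nat \<Rightarrow> (nat \<Rightarrow> 'a) \<Rightarrow> 'a)"
  using part1 part2 by blast

end
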